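(* Let $X$ be a compact metric space and $f\colon X\to X$ continuous. If $f$ is expansive and $(X,f)$ has the shadowing property, then $(X,f)$ has $\gamma$-restricted two-sided orbital limit shadowing.
   Context: $f$ is expansive if there is $c>0$ such that for distinct $x,y\in X$ there exists $k\ge0$ with $d(f^k(x),f^k(y))\ge c$. $(X,f)$ has shadowing if for every $\epsilon>0$ there is $\delta>0$ such that for every sequence $\langle x_i\rangle_{i\ge0}$ with $d(f(x_i),x_{i+1})<\delta$ for all $i$ there is $z\in X$ with $d(f^i(z),x_i)<\epsilon$ for all $i\ge0$. A full trajectory is $\langle z_i\rangle_{i\in\mathbb Z}$ with $f(z_i)=z_{i+1}$. For two-sided sequences, $\omega(\langle x_i\rangle)=\bigcap_{M}\overline{\{x_n:n>M\}}$ and $\alpha(\langle x_i\rangle)=\bigcap_M\overline{\{x_n:n<-M\}}$. A two-sided asymptotic pseudo-orbit is $\langle x_i\rangle_{i\in\mathbb Z}$ with $d(f(x_i),x_{i+1})\to0$ as $i\to\pm\infty$. $\gamma$-restricted two-sided orbital limit shadowing: for every two-sided asymptotic pseudo-orbit $\langle x_i\rangle$ with $\alpha(\langle x_i\rangle)=\omega(\langle x_i\rangle)$ there is a full trajectory $\langle z_i\rangle$ with $\alpha(\langle z_i\rangle)=\alpha(\langle x_i\rangle)$ and $\omega(\langle z_i\rangle)=\omega(\langle x_i\rangle)$. *)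

theory Defs
  imports "HOL-Analysis.Analysis"
begin

definition expansive :: "'a::metric_space set \<Rightarrow> ('a \<Rightarrow> 'a) \<Rightarrow> bool" where
  "expansive X f \<longleftrightarrow> (\<exists>c>0. \<forall>x\<in>X. \<forall>y\<in>X. x \<noteq> y \<longrightarrow>
      (\<exists>k::nat. dist ((f ^^ k) x) ((f ^^ k) y) \<ge> c))"

definition shadowing :: "'a::metric_space set \<Rightarrow> ('a \<Rightarrow> 'a) \<Rightarrow> bool" where
  "shadowing X f \<longleftrightarrow> (\<forall>\<epsilon>>0. \<exists>\<delta>>0. \<forall>xs::nat \<Rightarrow> 'a.
      (\<forall>i. xs i \<in> X) \<and> (\<forall>i. dist (f (xs i)) (xs (Suc i)) < \<delta>) \<longrightarrow>
      (\<exists>z\<in>X. \<forall>i. dist ((f ^^ i) z) (xs i) < \<epsilon>))"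

definition omega_seq :: "(int \<Rightarrow> 'a::topological_space) \<Rightarrow> 'a set" where
  "omega_seq x = (\<Inter>M::int. closure {x n | n. n > M})"

definition alpha_seq :: "(int \<Rightarrow> 'a::topological_space) \<Rightarrow> 'a set" where
  "alpha_seq x = (\<Inter>M::int. closure {x n | n. n < - M})"

definition two_sided_asymptotic_pseudo_orbit ::
  "'a::metric_space set \<Rightarrow> ('a \<Rightarrow> 'a) \<Rightarrow> (int \<Rightarrow> 'a) \<Rightarrow> bool" where
  "two_sided_asymptotic_pseudo_orbit X f x \<longleftrightarrow> (\<forall>i. x i \<in> X) \<and>
     ((\<lambda>i. dist (f (x i)) (x (i + 1))) \<longlongrightarrow> 0) at_top \<and>
     ((\<lambda>i. dist (f (x i)) (x (i + 1))) \<longlongrightarrow> 0) at_bot"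

definition full_trajectory :: "'a set \<Rightarrow> ('a \<Rightarrow> 'a) \<Rightarrow> (int \<Rightarrow> 'a) \<Rightarrow> bool" where
  "full_trajectory X f z \<longleftrightarrow> (\<forall>i. z i \<in> X) \<and> (\<forall>i. f (z i) = z (i + 1))"

definition gamma_restricted_two_sided_orbital_limit_shadowing ::
  "'a::metric_space set \<Rightarrow> ('a \<Rightarrow> 'a) \<Rightarrow> bool" where
  "gamma_restricted_two_sided_orbital_limit_shadowing X f \<longleftrightarrow>
     (\<forall>x. two_sided_asymptotic_pseudo_orbit X f x \<and> alpha_seq x = omega_seq x \<longrightarrow>
        (\<exists>z. full_trajectory X f z \<and> alpha_seq z = alpha_seq x \<and> omega_seq z = omega_seq x))"

end

theory Submission
  imports Defs
begin

lemma iter_X: "f ` X \<subseteq> X \<Longrightarrow> x \<in> X \<Longrightarrow> (f^^n) x \<in> X"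
proof (induction n)
  case 0 then show ?case by simp
next
  case (Suc n)
  then have "(f^^n) x \<in> X" by blast
  then have "f ((f^^n) x) \<in> X" using Suc.prems(1) image_subset_iff by metis
  then show ?case by simp
qed

lemma cont_iter: "f ` X \<subseteq> X \<Longrightarrow> continuous_on X f \<Longrightarrow> continuous_on X (f^^n)"
proof (induction n)
  case 0 then show ?case by (simp add: continuous_on_id)
next
  case (Suc n)
  have "continuous_on X (\<lambda>x. f ((f^^n) x))"
    by (rule continuous_on_compose2[OF Suc.prems(2) Suc.IH[OF Suc.prems]]) (rule image_subsetI, rule iter_X[OF Suc.prems(1)])
  then show ?case by (simp add: o_def)
qed

lemma omega_char: "p \<in> omega_seq x \<longleftrightarrow> (\<forall>M e. e > 0 \<longrightarrow> (\<exists>n>M. dist (x n) p < e))"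
  by (simp add: omega_seq_def closure_approachable, blast)

lemma alpha_char: "p \<in> alpha_seq x \<longleftrightarrow> (\<forall>M e. e > 0 \<longrightarrow> (\<exists>n< -M. dist (x n) p < e))"
  by (simp add: alpha_seq_def closure_approachable, blast)

lemma omega_sub:
  fixes z x :: "int \<Rightarrow> 'a::metric_space"
  assumes "\<forall>e>0. \<exists>M. \<forall>n\<ge>M. dist (z n) (x (n+s)) < e"
  shows "omega_seq x \<subseteq> omega_seq z"
proof
  fix p assume p: "p \<in> omega_seq x"
  show "p \<in> omega_seq z" unfolding omega_char
  proof (intro allI impI)
    fix M and e::real assume "e>0"
    obtain M0 where M0: "\<forall>n\<ge>M0. dist (z n) (x (n+s)) < e/2" using assms \<open>e>0\<close> half_gt_zero by blast
    have "\<exists>n > max (M+s) (M0+s). dist (x n) p < e/2" by (rule p[unfolded omega_char, rule_format]) (simp add: \<open>e>0\<close>)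
    then obtain n where n: "n > max (M+s) (M0+s)" "dist (x n) p < e/2" by blast
    have "dist (z (n-s)) (x n) < e/2" using M0[rule_format, of "n-s"] n(1) by simp
    then have "dist (z (n-s)) p < e" using n(2) dist_triangle[of "z (n-s)" p "x n"] by linarith
    moreover have "n - s > M" using n(1) by linarith
    ultimately show "\<exists>m>M. dist (z m) p < e" by blast
  qed
qed

lemma omega_eq:
  fixes z x :: "int \<Rightarrow> 'a::metric_space"
  assumes "\<forall>e>0. \<exists>M. \<forall>n\<ge>M. dist (z n) (x (n+s)) < e"
  shows "omega_seq z = omega_seq x"
proof
  show "omega_seq x \<subseteq> omega_seq z" by (rule omega_sub[OF assms])
  have "\<forall>e>0. \<exists>M. \<forall>n\<ge>M. dist (x n) (z (n+ -s)) < e"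
  proof (intro allI impI)
    fix e::real assume "e>0"
    then obtain M where M: "\<forall>n\<ge>M. dist (z n) (x (n+s)) < e" using assms by blast
    show "\<exists>M. \<forall>n\<ge>M. dist (x n) (z (n+ -s)) < e"
    proof (intro exI[of _ "M+s"] allI impI)
      fix n assume "n \<ge> M+s"
      then have "dist (z (n-s)) (x (n-s+s)) < e" using M[rule_format, of "n-s"] by linarith
      then have "dist (z (n-s)) (x n) < e" by simp
      then show "dist (x n) (z (n+ -s)) < e" using dist_commute[of "x n" "z (n-s)"] by simp
    qed
  qed
  then show "omega_seq z \<subseteq> omega_seq x" by (rule omega_sub)
qed

lemma alpha_sub:
  fixes z x :: "int \<Rightarrow> 'a::metric_space"
  assumes "\<forall>e>0. \<exists>M. \<forall>n\<le>M. dist (z n) (x n) < e"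
  shows "alpha_seq x \<subseteq> alpha_seq z"
proof
  fix p assume p: "p \<in> alpha_seq x"
  show "p \<in> alpha_seq z" unfolding alpha_char
  proof (intro allI impI)
    fix M and e::real assume "e>0"
    obtain M0 where M0: "\<forall>n\<le>M0. dist (z n) (x n) < e/2" using assms \<open>e>0\<close> half_gt_zero by blast
    have "\<exists>n < - max M (-M0). dist (x n) p < e/2" by (rule p[unfolded alpha_char, rule_format]) (simp add: \<open>e>0\<close>)
    then obtain n where n: "n < - max M (-M0)" "dist (x n) p < e/2" by blast
    have "dist (z n) (x n) < e/2" using M0[rule_format, of "n"] n(1) by simp
    then have "dist (z n) p < e" using n(2) dist_triangle[of "z n" p "x n"] by linarith
    moreover have "n < -M" using n(1) by linarith
    ultimately show "\<exists>m< -M. dist (z m) p < e" by blast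
  qed
qed

lemma alpha_eq:
  fixes z x :: "int \<Rightarrow> 'a::metric_space"
  assumes "\<forall>e>0. \<exists>M. \<forall>n\<le>M. dist (z n) (x n) < e"
  shows "alpha_seq z = alpha_seq x"
proof
  show "alpha_seq x \<subseteq> alpha_seq z" by (rule alpha_sub[OF assms])
  have "\<forall>e>0. \<exists>M. \<forall>n\<le>M. dist (x n) (z n) < e"
  proof (intro allI impI)
    fix e::real assume "e>0"
    then obtain M where M: "\<forall>n\<le>M. dist (z n) (x n) < e" using assms by blast
    have "\<forall>n\<le>M. dist (x n) (z n) < e"
    proof (intro allI impI)
      fix n assume "n \<le> M"
      then have "dist (z n) (x n) < e" using M by blast
      then show "dist (x n) (z n) < e" by (simp only: dist_commute)
    qed
    then show "\<exists>M. \<forall>n\<le>M. dist (x n) (z n) < e" by blast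
  qed
  then show "alpha_seq z \<subseteq> alpha_seq x" by (rule alpha_sub)
qed

lemma omega_ne:
  fixes x :: "int \<Rightarrow> 'a::metric_space"
  assumes "compact X" "\<forall>i. x i \<in> X"
  shows "\<exists>a. a \<in> omega_seq x"
proof -
  define y where "y = (\<lambda>n::nat. x (int n))"
  have yX: "\<And>n. y n \<in> X" unfolding y_def using assms(2) by simp
  have "\<exists>l\<in>X. \<exists>r. strict_mono r \<and> (y \<circ> r) \<longlonglongrightarrow> l"
    using compact_imp_seq_compact[OF assms(1)] yX unfolding seq_compact_def by simp
  then obtain l r where lr: "l \<in> X" "strict_mono r" "(y \<circ> r) \<longlonglongrightarrow> l" by metis
  have "l \<in> omega_seq x" unfolding omega_char
  proof (intro allI impI)
    fix M and e::real assume "e>0"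
    then obtain N where N: "\<And>n. n \<ge> N \<Longrightarrow> dist ((y \<circ> r) n) l < e"
      using lr(3) unfolding lim_sequentially by metis
    define n where "n = max N (nat M + 1)"
    have "n \<le> r n" using seq_suble[OF lr(2)] .
    moreover have "nat M + 1 \<le> n" unfolding n_def by simp
    ultimately have "int (r n) > M" by linarith
    moreover have "dist (x (int (r n))) l < e" using N[of n] unfolding n_def y_def by simp
    ultimately show "\<exists>n>M. dist (x n) l < e" by blast
  qed
  then show ?thesis by blast
qed

lemma unif:
  fixes X :: "'a::metric_space set"
  assumes X: "compact X" and fX: "f ` X \<subseteq> X" and cf: "continuous_on X f" and "c>0"
    and expc: "\<forall>x\<in>X. \<forall>y\<in>X. x \<noteq> y \<longrightarrow> (\<exists>k. dist ((f^^k) x) ((f^^k) y) \<ge> c)" and "\<eta>>0"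
  shows "\<exists>N. \<forall>a\<in>X. \<forall>b\<in>X. (\<forall>k\<le>N. dist ((f^^k) a) ((f^^k) b) \<le> c/2) \<longrightarrow> dist a b < \<eta>"
proof (rule ccontr)
  assume "\<not> ?thesis"
  then have "\<forall>N. \<exists>a b. a\<in>X \<and> b\<in>X \<and> (\<forall>k\<le>N. dist ((f^^k) a) ((f^^k) b) \<le> c/2) \<and> dist a b \<ge> \<eta>"
    by (simp add: not_less Bex_def)
  from choice[OF this] obtain A where hA: "\<forall>N. \<exists>b. A N \<in> X \<and> b\<in>X \<and> (\<forall>k\<le>N. dist ((f^^k) (A N)) ((f^^k) b) \<le> c/2) \<and> dist (A N) b \<ge> \<eta>"
    by blast
  from choice[OF hA] obtain B where AB': "\<forall>N. A N \<in> X \<and> B N \<in> X \<and> (\<forall>k\<le>N. dist ((f^^k) (A N)) ((f^^k) (B N)) \<le> c/2) \<and> dist (A N) (B N) \<ge> \<eta>"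
    by blast
  have AB: "A N \<in> X \<and> B N \<in> X \<and> (\<forall>k\<le>N. dist ((f^^k) (A N)) ((f^^k) (B N)) \<le> c/2) \<and> dist (A N) (B N) \<ge> \<eta>" for N
    using AB' by blast
  have "\<And>n. A n \<in> X" using AB by blast
  have "\<exists>l\<in>X. \<exists>r. strict_mono r \<and> (A \<circ> r) \<longlonglongrightarrow> l"
    using compact_imp_seq_compact[OF X] \<open>\<And>n. A n \<in> X\<close> unfolding seq_compact_def by simp
  then obtain a r1 where a: "a \<in> X" "strict_mono r1" "(A \<circ> r1) \<longlonglongrightarrow> a" by metis
  have BX: "\<And>n. (B \<circ> r1) n \<in> X" using AB by simp
  have "\<exists>l\<in>X. \<exists>r. strict_mono r \<and> ((B \<circ> r1) \<circ> r) \<longlonglongrightarrow> l"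
    using compact_imp_seq_compact[OF X] BX unfolding seq_compact_def by simp
  then obtain b r2 where b: "b \<in> X" "strict_mono r2" "((B \<circ> r1) \<circ> r2) \<longlonglongrightarrow> b" by metis
  define r where "r = r1 \<circ> r2"
  have sr: "strict_mono r" unfolding r_def using a(2) b(2) by (rule strict_mono_o)
  have LA: "(\<lambda>n. A (r n)) \<longlonglongrightarrow> a" using LIMSEQ_subseq_LIMSEQ[OF a(3) b(2)] by (simp add: r_def o_def)
  have LB: "(\<lambda>n. B (r n)) \<longlonglongrightarrow> b" using b(3) by (simp add: r_def o_def)
  have le: "dist ((f^^k) a) ((f^^k) b) \<le> c/2" for k
  proof -
    have t1: "(\<lambda>n. (f^^k) (A (r n))) \<longlonglongrightarrow> (f^^k) a"
      using continuous_on_tendsto_compose[OF cont_iter[OF fX cf] LA a(1)] AB by (simp add: o_def)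
    have t2: "(\<lambda>n. (f^^k) (B (r n))) \<longlonglongrightarrow> (f^^k) b"
      using continuous_on_tendsto_compose[OF cont_iter[OF fX cf] LB b(1)] AB by (simp add: o_def)
    have "eventually (\<lambda>n. dist ((f^^k) (A (r n))) ((f^^k) (B (r n))) \<le> c/2) sequentially"
      unfolding eventually_sequentially
    proof (intro exI allI impI)
      fix n assume "k \<le> n"
      then have "k \<le> r n" using seq_suble[OF sr, of n] by linarith
      then show "dist ((f^^k) (A (r n))) ((f^^k) (B (r n))) \<le> c/2" using AB by blast
    qed
    from tendsto_upperbound[OF tendsto_dist[OF t1 t2] this] show ?thesis by simp
  qed
  have "dist a b \<ge> \<eta>"
    using tendsto_lowerbound[OF tendsto_dist[OF LA LB]] AB by simp
  then have "a \<noteq> b" using \<open>\<eta>>0\<close> by auto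
  then obtain k where "dist ((f^^k) a) ((f^^k) b) \<ge> c" using expc a(1) b(1) by blast
  with le[of k] \<open>c>0\<close> show False by linarith
qed

lemma core:
  fixes X :: "'a::metric_space set" and w :: "int \<Rightarrow> 'a"
  assumes X: "compact X" and fX: "f ` X \<subseteq> X" and cf: "continuous_on X f" and c: "c>0"
    and expc: "\<forall>x\<in>X. \<forall>y\<in>X. x \<noteq> y \<longrightarrow> (\<exists>k. dist ((f^^k) x) ((f^^k) y) \<ge> c)"
    and sh: "shadowing X f"
    and shd0: "\<forall>xs. (\<forall>i. xs i \<in> X) \<and> (\<forall>i. dist (f (xs i)) (xs (Suc i)) < \<delta>0) \<longrightarrow>
                 (\<exists>z\<in>X. \<forall>i. dist ((f^^i) z) (xs i) < c/4)"
    and wX: "\<And>k. w k \<in> X" and wpo: "\<And>k. dist (f (w k)) (w (k+1)) < \<delta>0"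
    and wasy: "\<forall>e>0. \<exists>M. \<forall>k. (k \<ge> M \<or> k \<le> -M) \<longrightarrow> dist (f (w k)) (w (k+1)) < e"
  shows "\<exists>z. full_trajectory X f z \<and> (\<forall>e>0. \<exists>M. \<forall>n\<ge>M. dist (z n) (w n) < e)
            \<and> (\<forall>e>0. \<exists>M. \<forall>n\<le>M. dist (z n) (w n) < e)"
proof -
  define shad where "shad p i \<epsilon> \<longleftrightarrow> p \<in> X \<and> (\<forall>n::nat. dist ((f^^n) p) (w (i + int n)) < \<epsilon>)"
    for p i and \<epsilon> :: real
  have ex: "\<exists>p. shad p i (c/4)" for i
  proof -
    have "\<forall>n. w (i + int n) \<in> X" using wX by simp
    moreover have "\<forall>n. dist (f (w (i + int n))) (w (i + int (Suc n))) < \<delta>0"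
    proof
      fix n
      have "w (i + int (Suc n)) = w (i + int n + 1)" by (simp add: ac_simps)
      then show "dist (f (w (i + int n))) (w (i + int (Suc n))) < \<delta>0" using wpo[of "i + int n"] by simp
    qed
    ultimately obtain p where "p \<in> X" "\<forall>n. dist ((f^^n) p) (w (i + int n)) < c/4"
      using shd0[rule_format, of "\<lambda>n. w (i + int n)"] by metis
    then show ?thesis unfolding shad_def by metis
  qed
  have uniq: "p = q" if "shad p i e1" "shad q i e2" "e1 \<le> c/4" "e2 \<le> c/4" for p q i e1 e2
  proof (rule ccontr)
    assume "p \<noteq> q"
    moreover have "p \<in> X" "q \<in> X" using that unfolding shad_def by auto
    ultimately obtain k where k: "dist ((f^^k) p) ((f^^k) q) \<ge> c" using expc by metis
    have "dist ((f^^k) p) (w (i + int k)) < e1" "dist ((f^^k) q) (w (i + int k)) < e2"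
      using that(1,2) unfolding shad_def by auto
    then have "dist ((f^^k) p) ((f^^k) q) < c/2"
      using dist_triangle2[of "(f^^k) p" "(f^^k) q" "w (i + int k)"] that(3,4) by linarith
    with k c show False by linarith
  qed
  have shift: "shad (f p) (i+1) e" if "shad p i e" for p i e
  proof -
    have "f p \<in> X" using that fX unfolding shad_def by auto
    moreover have "dist ((f^^n) (f p)) (w (i + 1 + int n)) < e" for n
    proof -
      have "(f^^n) (f p) = (f^^(Suc n)) p" by (simp add: funpow_swap1)
      moreover have "i + 1 + int n = i + int (Suc n)" by simp
      ultimately show ?thesis using that unfolding shad_def by metis
    qed
    ultimately show ?thesis unfolding shad_def by blast
  qed
  define z where "z i = (SOME p. shad p i (c/4))" for i
  have zs: "shad (z i) i (c/4)" for i unfolding z_def using ex[of i] by (rule someI_ex)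
  have zX: "z i \<in> X" for i using zs[of i] unfolding shad_def by blast
  have ztraj: "f (z i) = z (i+1)" for i using uniq[OF shift[OF zs[of i]] zs[of "i+1"]] by simp
  have ziter: "(f^^n) (z i) = z (i + int n)" for n i
  proof (induction n)
    case 0 then show ?case by simp
  next
    case (Suc n)
    have "(f^^Suc n) (z i) = f ((f^^n) (z i))" by simp
    also have "\<dots> = z (i + int n + 1)" using Suc ztraj by simp
    finally show ?case by (simp add: ac_simps)
  qed
  have zw: "dist (z i) (w i) < c/4" for i using zs[of i] unfolding shad_def by (metis funpow_0 add_0_right of_nat_0)
  have full: "full_trajectory X f z" unfolding full_trajectory_def using zX ztraj by blast
  have fwd: "\<forall>e>0. \<exists>M. \<forall>n\<ge>M. dist (z n) (w n) < e"
  proof (intro allI impI)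
    fix e :: real assume "e>0"
    define e' where "e' = min e (c/4)"
    have "e'>0" unfolding e'_def using \<open>e>0\<close> c by simp
    then obtain \<delta> where "\<delta>>0" and hd: "\<forall>xs. (\<forall>i. xs i \<in> X) \<and> (\<forall>i. dist (f (xs i)) (xs (Suc i)) < \<delta>) \<longrightarrow>
      (\<exists>z\<in>X. \<forall>i. dist ((f^^i) z) (xs i) < e')" using sh unfolding shadowing_def by metis
    obtain M where hM: "\<forall>k. (k \<ge> M \<or> k \<le> -M) \<longrightarrow> dist (f (w k)) (w (k+1)) < \<delta>"
      using wasy \<open>\<delta>>0\<close> by metis
    have "\<forall>n. w (M + int n) \<in> X" using wX by simp
    moreover have "\<forall>n. dist (f (w (M + int n))) (w (M + int (Suc n))) < \<delta>"
    proof
      fix n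
      have "w (M + int (Suc n)) = w (M + int n + 1)" by (simp add: ac_simps)
      moreover have "M + int n \<ge> M" by simp
      ultimately show "dist (f (w (M + int n))) (w (M + int (Suc n))) < \<delta>" using hM by metis
    qed
    ultimately obtain p where "p \<in> X" "\<forall>n. dist ((f^^n) p) (w (M + int n)) < e'"
      using hd[rule_format, of "\<lambda>n. w (M + int n)"] by metis
    then have sp: "shad p M e'" unfolding shad_def by metis
    have "e' \<le> c/4" unfolding e'_def by simp
    then have pz: "p = z M" using uniq[OF sp zs[of M]] by simp
    show "\<exists>M. \<forall>n\<ge>M. dist (z n) (w n) < e"
    proof (intro exI allI impI)
      fix n assume "n \<ge> M"
      then have nn: "M + int (nat (n - M)) = n" by simp
      have "dist ((f^^(nat (n-M))) p) (w (M + int (nat (n - M)))) < e'" using sp unfolding shad_def by blast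
      then have "dist (z n) (w n) < e'" using ziter[of "nat (n-M)" M] pz nn by simp
      then show "dist (z n) (w n) < e" unfolding e'_def by simp
    qed
  qed
  have bwd: "\<forall>e>0. \<exists>M. \<forall>n\<le>M. dist (z n) (w n) < e"
  proof (intro allI impI)
    fix e :: real assume "e>0"
    obtain N where hN: "\<forall>a\<in>X. \<forall>b\<in>X. (\<forall>k\<le>N. dist ((f^^k) a) ((f^^k) b) \<le> c/2) \<longrightarrow> dist a b < e/2"
      using unif[OF X fX cf c expc, of "e/2"] \<open>e>0\<close> by auto
    define e' where "e' = min (e/2) (c/4)"
    have "e'>0" unfolding e'_def using \<open>e>0\<close> c by simp
    then obtain \<delta> where "\<delta>>0" and hd: "\<forall>xs. (\<forall>i. xs i \<in> X) \<and> (\<forall>i. dist (f (xs i)) (xs (Suc i)) < \<delta>) \<longrightarrow>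
      (\<exists>z\<in>X. \<forall>i. dist ((f^^i) z) (xs i) < e')" using sh unfolding shadowing_def by metis
    obtain M where hM: "\<forall>k. (k \<ge> M \<or> k \<le> -M) \<longrightarrow> dist (f (w k)) (w (k+1)) < \<delta>"
      using wasy \<open>\<delta>>0\<close> by metis
    show "\<exists>M'. \<forall>i\<le>M'. dist (z i) (w i) < e"
    proof (intro exI allI impI)
      fix i assume i: "i \<le> -M - int N"
      define v where "v n = (if i + int n \<le> -M then w (i + int n) else (f^^(nat (i + int n + M))) (w (-M)))" for n
      have vX: "\<forall>n. v n \<in> X" unfolding v_def using wX iter_X[OF fX] by simp
      have vpo: "\<forall>n. dist (f (v n)) (v (Suc n)) < \<delta>"
      proof
        fix n
        consider (a) "i + int n + 1 \<le> -M" | (b) "i + int n = -M" | (c) "i + int n > -M" by linarith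
        then show "dist (f (v n)) (v (Suc n)) < \<delta>"
        proof cases
          case a
          then have "v n = w (i + int n)" "v (Suc n) = w (i + int n + 1)" unfolding v_def by (simp_all add: ac_simps)
          moreover have "i + int n \<le> -M" using a by simp
          ultimately show ?thesis using hM by metis
        next
          case b
          have e1: "nat (i + int (Suc n) + M) = 1" using b by simp
          have "v (Suc n) = (f^^(nat (i + int (Suc n) + M))) (w (-M))" unfolding v_def using b by simp
          then have "v (Suc n) = f (w (-M))" using e1 by simp
          moreover have "v n = w (-M)" unfolding v_def using b by simp
          ultimately show ?thesis using \<open>\<delta>>0\<close> by simp
        next
          case c
          define m where "m = nat (i + int n + M)"
          have "nat (i + int (Suc n) + M) = Suc m" unfolding m_def using c by simp
          have "v (Suc n) = (f^^(nat (i + int (Suc n) + M))) (w (-M))" unfolding v_def using c by simp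
          then have "v (Suc n) = (f^^(Suc m)) (w (-M))" using \<open>nat (i + int (Suc n) + M) = Suc m\<close> by simp
          moreover have "v n = (f^^m) (w (-M))" unfolding v_def m_def using c by simp
          ultimately show ?thesis using \<open>\<delta>>0\<close> by simp
        qed
      qed
      obtain p where pX: "p \<in> X" and hp: "\<forall>n. dist ((f^^n) p) (v n) < e'"
        using hd[rule_format, of v] vX vpo by metis
      have "\<forall>k\<le>N. dist ((f^^k) p) ((f^^k) (z i)) \<le> c/2"
      proof (intro allI impI)
        fix k assume "k \<le> N"
        then have "i + int k \<le> -M" using i by linarith
        then have vk: "v k = w (i + int k)" unfolding v_def by simp
        have d1: "dist ((f^^k) p) (w (i + int k)) < c/4" using hp[rule_format, of k] vk unfolding e'_def by simp
        have d2: "dist ((f^^k) (z i)) (w (i + int k)) < c/4" using zw[of "i + int k"] ziter[of k i] by simp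
        show "dist ((f^^k) p) ((f^^k) (z i)) \<le> c/2"
          using dist_triangle2[of "(f^^k) p" "(f^^k) (z i)" "w (i + int k)"] d1 d2 by linarith
      qed
      then have d3: "dist p (z i) < e/2" using hN pX zX by blast
      have "i \<le> -M" using i by linarith
      then have "v 0 = w i" unfolding v_def by simp
      then have d4: "dist p (w i) < e/2" using hp[rule_format, of 0] unfolding e'_def by simp
      show "dist (z i) (w i) < e"
        using dist_triangle3[of "z i" "w i" p] d3 d4 by linarith
    qed
  qed
  show ?thesis using full fwd bwd by blast
qed

theorem mainTheorem3:
  fixes X :: "'a::metric_space set" and f :: "'a \<Rightarrow> 'a"
  assumes "compact X"
    and "f ` X \<subseteq> X"
    and "continuous_on X f"
    and "expansive X f"
    and "shadowing X f"
  shows "gamma_restricted_two_sided_orbital_limit_shadowing X f"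
  unfolding gamma_restricted_two_sided_orbital_limit_shadowing_def
proof (intro allI impI)
  fix x assume H: "two_sided_asymptotic_pseudo_orbit X f x \<and> alpha_seq x = omega_seq x"
  then have xX: "\<And>i. x i \<in> X" and ltop: "((\<lambda>i. dist (f (x i)) (x (i + 1))) \<longlongrightarrow> 0) at_top"
    and lbot: "((\<lambda>i. dist (f (x i)) (x (i + 1))) \<longlongrightarrow> 0) at_bot" and AO: "alpha_seq x = omega_seq x"
    unfolding two_sided_asymptotic_pseudo_orbit_def by blast+
  obtain c where c: "c>0" and expc: "\<forall>x\<in>X. \<forall>y\<in>X. x \<noteq> y \<longrightarrow> (\<exists>k. dist ((f^^k) x) ((f^^k) y) \<ge> c)"
    using assms(4) unfolding expansive_def by metis
  have "c/4 > 0" using c by simp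
  then obtain \<delta>0 where d0: "\<delta>0 > 0" and shd0: "\<forall>xs. (\<forall>i. xs i \<in> X) \<and> (\<forall>i. dist (f (xs i)) (xs (Suc i)) < \<delta>0) \<longrightarrow>
                 (\<exists>z\<in>X. \<forall>i. dist ((f^^i) z) (xs i) < c/4)"
    using assms(5) unfolding shadowing_def by metis
  have asym: "\<exists>M\<ge>0. \<forall>k. (k \<ge> M \<or> k \<le> -M) \<longrightarrow> dist (f (x k)) (x (k+1)) < e" if "e>0" for e
  proof -
    have "eventually (\<lambda>i. dist (dist (f (x i)) (x (i + 1))) 0 < e) at_top"
      using ltop that unfolding tendsto_iff by blast
    then obtain M1 where M1: "\<And>k. k \<ge> M1 \<Longrightarrow> dist (dist (f (x k)) (x (k + 1))) 0 < e"
      unfolding eventually_at_top_linorder by metis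
    have "eventually (\<lambda>i. dist (dist (f (x i)) (x (i + 1))) 0 < e) at_bot"
      using lbot that unfolding tendsto_iff by blast
    then obtain M2 where M2: "\<And>k. k \<le> M2 \<Longrightarrow> dist (dist (f (x k)) (x (k + 1))) 0 < e"
      unfolding eventually_at_bot_linorder by metis
    define M where "M = max 0 (max M1 (-M2))"
    have "\<forall>k. (k \<ge> M \<or> k \<le> -M) \<longrightarrow> dist (f (x k)) (x (k+1)) < e"
    proof (intro allI impI)
      fix k assume "k \<ge> M \<or> k \<le> -M"
      then have "k \<ge> M1 \<or> k \<le> M2" unfolding M_def by linarith
      then have "dist (dist (f (x k)) (x (k + 1))) 0 < e" using M1 M2 by blast
      then show "dist (f (x k)) (x (k+1)) < e" by simp
    qed
    moreover have "M \<ge> 0" unfolding M_def by simp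
    ultimately show ?thesis by blast
  qed
  obtain a where a: "a \<in> omega_seq x" using omega_ne[OF assms(1)] xX by blast
  have "\<delta>0/2 > 0" using d0 by simp
  then obtain M where M0: "M \<ge> 0" and hM: "\<forall>k. (k \<ge> M \<or> k \<le> -M) \<longrightarrow> dist (f (x k)) (x (k+1)) < \<delta>0/2"
    using asym by metis
  have "\<delta>0/4 > 0" using d0 by simp
  have "a \<in> alpha_seq x" using a AO by simp
  then have "\<exists>n < -M. dist (x n) a < \<delta>0/4" unfolding alpha_char using \<open>\<delta>0/4 > 0\<close> by blast
  then obtain i where i: "i < -M" "dist (x i) a < \<delta>0/4" by blast
  have "\<exists>n > M. dist (x n) a < \<delta>0/4" using a unfolding omega_char using \<open>\<delta>0/4 > 0\<close> by blast
  then obtain j where j: "j > M" "dist (x j) a < \<delta>0/4" by blast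
  define s where "s = j - i"
  have s0: "s > 0" unfolding s_def using i j M0 by linarith
  define w where "w k = (if k < i then x k else x (k + s))" for k
  have wX: "\<And>k. w k \<in> X" unfolding w_def using xX by simp
  have dij: "dist (x i) (x j) < \<delta>0/2" using dist_triangle3[of "x i" "x j" a] i(2) j(2) by (simp add: dist_commute)
  have wpo: "dist (f (w k)) (w (k+1)) < \<delta>0" for k
  proof -
    consider (a) "k + 1 < i" | (b) "k + 1 = i" | (c) "k \<ge> i" by linarith
    then show ?thesis
    proof cases
      case a
      then have "w k = x k" "w (k+1) = x (k+1)" unfolding w_def by simp_all
      moreover have "k \<le> -M" using a i by linarith
      ultimately show ?thesis using hM d0 by force
    next
      case b
      then have kk: "k = i - 1" by simp
      then have "w k = x (i - 1)" "w (k+1) = x j" unfolding w_def s_def by simp_all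
      moreover have "i - 1 \<le> -M" using i(1) by linarith
      then have "dist (f (x (i-1))) (x (i - 1 + 1)) < \<delta>0/2" using hM by blast
      ultimately show ?thesis using dij dist_triangle[of "f (x (i-1))" "x j" "x i"] by simp
    next
      case c
      then have "w k = x (k + s)" "w (k+1) = x (k + s + 1)" unfolding w_def by (simp_all add: ac_simps)
      moreover have "k + s \<ge> M" using c j unfolding s_def by linarith
      ultimately show ?thesis using hM d0 by force
    qed
  qed
  have wasy: "\<forall>e>0. \<exists>M. \<forall>k. (k \<ge> M \<or> k \<le> -M) \<longrightarrow> dist (f (w k)) (w (k+1)) < e"
  proof (intro allI impI)
    fix e :: real assume "e > 0"
    then obtain M1 where M1: "M1 \<ge> 0" "\<forall>k. (k \<ge> M1 \<or> k \<le> -M1) \<longrightarrow> dist (f (x k)) (x (k+1)) < e"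
      using asym by metis
    define M' where "M' = M1 + \<bar>i\<bar> + 2"
    have "\<forall>k. (k \<ge> M' \<or> k \<le> -M') \<longrightarrow> dist (f (w k)) (w (k+1)) < e"
    proof (intro allI impI)
      fix k assume "k \<ge> M' \<or> k \<le> -M'"
      then consider "k \<ge> M'" | "k \<le> -M'" by blast
      then show "dist (f (w k)) (w (k+1)) < e"
      proof cases
        case 1
        then have "\<not> k < i" "\<not> k + 1 < i" unfolding M'_def using M1(1) by linarith+
        then have "w k = x (k + s)" "w (k+1) = x (k + s + 1)" unfolding w_def by (simp_all add: ac_simps)
        moreover have "k + s \<ge> M1" using 1 s0 unfolding M'_def by linarith
        ultimately show ?thesis using M1 by force
      next
        case 2
        then have "k < i" "k + 1 < i" unfolding M'_def using M1(1) by linarith+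
        then have "w k = x k" "w (k+1) = x (k + 1)" unfolding w_def by simp_all
        moreover have "k \<le> -M1" using 2 unfolding M'_def by linarith
        ultimately show ?thesis using M1 by force
      qed
    qed
    then show "\<exists>M. \<forall>k. (k \<ge> M \<or> k \<le> -M) \<longrightarrow> dist (f (w k)) (w (k+1)) < e" by blast
  qed
  obtain z where z: "full_trajectory X f z" and fwd: "\<forall>e>0. \<exists>M. \<forall>n\<ge>M. dist (z n) (w n) < e"
    and bwd: "\<forall>e>0. \<exists>M. \<forall>n\<le>M. dist (z n) (w n) < e"
    using core[OF assms(1-3) c expc assms(5) shd0 wX wpo wasy] by metis
  have "\<forall>e>0. \<exists>M. \<forall>n\<ge>M. dist (z n) (x (n+s)) < e"
  proof (intro allI impI)
    fix e :: real assume "e>0"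
    then obtain M1 where M1: "\<forall>n\<ge>M1. dist (z n) (w n) < e" using fwd by metis
    have "\<forall>n\<ge>max M1 i. dist (z n) (x (n+s)) < e"
    proof (intro allI impI)
      fix n assume "n \<ge> max M1 i"
      then have "w n = x (n+s)" "n \<ge> M1" unfolding w_def by simp_all
      then show "dist (z n) (x (n+s)) < e" using M1 by metis
    qed
    then show "\<exists>M. \<forall>n\<ge>M. dist (z n) (x (n+s)) < e" by blast
  qed
  then have om: "omega_seq z = omega_seq x" by (rule omega_eq)
  have "\<forall>e>0. \<exists>M. \<forall>n\<le>M. dist (z n) (x n) < e"
  proof (intro allI impI)
    fix e :: real assume "e>0"
    then obtain M1 where M1: "\<forall>n\<le>M1. dist (z n) (w n) < e" using bwd by metis
    have "\<forall>n\<le>min M1 (i - 1). dist (z n) (x n) < e"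
    proof (intro allI impI)
      fix n assume "n \<le> min M1 (i - 1)"
      then have "w n = x n" "n \<le> M1" unfolding w_def by simp_all
      then show "dist (z n) (x n) < e" using M1 by metis
    qed
    then show "\<exists>M. \<forall>n\<le>M. dist (z n) (x n) < e" by blast
  qed
  then have al: "alpha_seq z = alpha_seq x" by (rule alpha_eq)
  show "\<exists>z. full_trajectory X f z \<and> alpha_seq z = alpha_seq x \<and> omega_seq z = omega_seq x"
    using z om al by blast
qed

end
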